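(* Let $X_1,\dots,X_n$ be features and $Y$ a target that is not a.s. constant, $\mathcal{F}=\{1,\dots,n\}$, and $i\in\mathcal{F}$. If $\mathrm{FI}(i)=1$, then $\mathrm{Dep}(X_i,Y)=1$ and $\mathrm{FI}(j)=0$ for every $j\in\mathcal{F}\setminus\{i\}$ (equivalently, every other feature $j$ satisfies $\mathrm{Dep}(S\cup\{j\},Y)=\mathrm{Dep}(S,Y)$ for all $S\subseteq\mathcal{F}\setminus\{j\}$).
   Context: All random variables are discrete with finite support and defined on a common probability space. For discrete random variables (or random vectors) $X$ and $Y$, define $$\mathrm{UD}(X,Y):=\sum_x p_X(x)\sum_y \bigl|p_{Y\mid X=x}(y)-p_Y(y)\bigr|,$$ and, when $Y$ is not almost surely constant, $\mathrm{Dep}(X,Y):=\mathrm{UD}(X,Y)/\mathrm{UD}(Y,Y)$. Given features $X_1,\dots,X_n$ with index set $\mathcal{F}=\{1,\dots,n\}$ and $S\subseteq\mathcal{F}$, write $X_S=(X_i)_{i\in S}$ ($X_\emptyset$ constant) and $\mathrm{Dep}(S,Y):=\mathrm{Dep}(X_S,Y)$. The Berkelmans–Pries feature importance is $$\mathrm{FI}(i):=\sum_{S\subseteq\mathcal{F}\setminus\{i\}}\frac{|S|!\,(n-|S|-1)!}{n!}\bigl(\mathrm{Dep}(S\cup\{i\},Y)-\mathrm{Dep}(S,Y)\bigr).$$ *)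

theory Defs
  imports "HOL-Probability.Probability"
begin

definition UD :: "'w pmf \<Rightarrow> ('w \<Rightarrow> 'x) \<Rightarrow> ('w \<Rightarrow> 'y) \<Rightarrow> real" where
  "UD M X Y =
     (\<Sum>x\<in>X ` set_pmf M. measure_pmf.prob M {w. X w = x} *
        (\<Sum>y\<in>Y ` set_pmf M.
           \<bar>measure_pmf.prob M {w. X w = x \<and> Y w = y} / measure_pmf.prob M {w. X w = x}
            - measure_pmf.prob M {w. Y w = y}\<bar>))"

definition Dep :: "'w pmf \<Rightarrow> ('w \<Rightarrow> 'x) \<Rightarrow> ('w \<Rightarrow> 'y) \<Rightarrow> real" where
  "Dep M X Y = UD M X Y / UD M Y Y"

definition featvec :: "(nat \<Rightarrow> 'w \<Rightarrow> 'v) \<Rightarrow> nat set \<Rightarrow> 'w \<Rightarrow> (nat \<Rightarrow> 'v)" where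
  "featvec X S = (\<lambda>w. restrict (\<lambda>i. X i w) S)"

definition DepS :: "'w pmf \<Rightarrow> (nat \<Rightarrow> 'w \<Rightarrow> 'v) \<Rightarrow> nat set \<Rightarrow> ('w \<Rightarrow> 'y) \<Rightarrow> real" where
  "DepS M X S Y = Dep M (featvec X S) Y"

definition FI :: "'w pmf \<Rightarrow> (nat \<Rightarrow> 'w \<Rightarrow> 'v) \<Rightarrow> nat \<Rightarrow> ('w \<Rightarrow> 'y) \<Rightarrow> nat \<Rightarrow> real" where
  "FI M X n Y i =
     (\<Sum>S\<in>Pow ({1..n} - {i}).
        (fact (card S) * fact (n - card S - 1) / fact n) *
        (DepS M X (S \<union> {i}) Y - DepS M X S Y))"

end

theory Submission imports Defs begin


lemma sum_prob:
  assumes "finite (f ` set_pmf M)"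
  shows "(\<Sum>x\<in>f ` set_pmf M. measure_pmf.prob M {w. f w = x \<and> P w}) = measure_pmf.prob M {w. P w}"
proof -
  have "(\<Sum>x\<in>f ` set_pmf M. measure_pmf.prob M {w. f w = x \<and> P w})
     = measure_pmf.prob M (\<Union>x\<in>f ` set_pmf M. {w. f w = x \<and> P w})"
    using assms by (intro measure_pmf.finite_measure_finite_Union[symmetric]) (auto simp: disjoint_family_on_def)
  also have "\<dots> = measure_pmf.prob M ((\<Union>x\<in>f ` set_pmf M. {w. f w = x \<and> P w}) \<inter> set_pmf M)"
    by (simp add: measure_Int_set_pmf)
  also have "(\<Union>x\<in>f ` set_pmf M. {w. f w = x \<and> P w}) \<inter> set_pmf M = {w. P w} \<inter> set_pmf M"
    by auto
  also have "measure_pmf.prob M \<dots> = measure_pmf.prob M {w. P w}"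
    by (simp add: measure_Int_set_pmf)
  finally show ?thesis .
qed

lemma UD_alt:
  "UD M X Y = (\<Sum>x\<in>X ` set_pmf M. \<Sum>y\<in>Y ` set_pmf M.
     \<bar>measure_pmf.prob M {w. X w = x \<and> Y w = y} - measure_pmf.prob M {w. X w = x} * measure_pmf.prob M {w. Y w = y}\<bar>)"
  unfolding UD_def
proof (rule sum.cong[OF refl])
  fix x assume "x \<in> X ` set_pmf M"
  then obtain w0 where "w0 \<in> set_pmf M" "x = X w0" by auto
  then have pos: "measure_pmf.prob M {w. X w = x} > 0" by (intro measure_pmf_posI[of w0]) auto
  show "measure_pmf.prob M {w. X w = x} * (\<Sum>y\<in>Y ` set_pmf M.
           \<bar>measure_pmf.prob M {w. X w = x \<and> Y w = y} / measure_pmf.prob M {w. X w = x}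
            - measure_pmf.prob M {w. Y w = y}\<bar>) = (\<Sum>y\<in>Y ` set_pmf M.
     \<bar>measure_pmf.prob M {w. X w = x \<and> Y w = y} - measure_pmf.prob M {w. X w = x} * measure_pmf.prob M {w. Y w = y}\<bar>)"
    unfolding sum_distrib_left
  proof (rule sum.cong[OF refl])
    fix y
    have "measure_pmf.prob M {w. X w = x} * \<bar>measure_pmf.prob M {w. X w = x \<and> Y w = y} / measure_pmf.prob M {w. X w = x}
            - measure_pmf.prob M {w. Y w = y}\<bar> = \<bar>measure_pmf.prob M {w. X w = x} * (measure_pmf.prob M {w. X w = x \<and> Y w = y} / measure_pmf.prob M {w. X w = x}
            - measure_pmf.prob M {w. Y w = y})\<bar>"
      using pos by (simp add: abs_mult)
    also have "\<dots> = \<bar>measure_pmf.prob M {w. X w = x \<and> Y w = y} - measure_pmf.prob M {w. X w = x} * measure_pmf.prob M {w. Y w = y}\<bar>"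
      using pos by (simp add: right_diff_distrib)
    finally show "measure_pmf.prob M {w. X w = x} * \<bar>measure_pmf.prob M {w. X w = x \<and> Y w = y} / measure_pmf.prob M {w. X w = x}
            - measure_pmf.prob M {w. Y w = y}\<bar> = \<bar>measure_pmf.prob M {w. X w = x \<and> Y w = y} - measure_pmf.prob M {w. X w = x} * measure_pmf.prob M {w. Y w = y}\<bar>" .
  qed
qed

lemma UD_nonneg: "UD M X Y \<ge> 0"
  unfolding UD_alt by (intro sum_nonneg) auto

lemma per_y_le:
  assumes fX: "finite (X ` set_pmf M)"
  shows "(\<Sum>x\<in>X ` set_pmf M. \<bar>measure_pmf.prob M {w. X w = x \<and> Y w = y} - measure_pmf.prob M {w. X w = x} * measure_pmf.prob M {w. Y w = y}\<bar>)
     \<le> 2 * measure_pmf.prob M {w. Y w = y} * (1 - measure_pmf.prob M {w. Y w = y})"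
proof -
  define q where "q = measure_pmf.prob M {w. Y w = y}"
  define a where "a x = measure_pmf.prob M {w. X w = x \<and> Y w = y}" for x
  define b where "b x = measure_pmf.prob M {w. X w = x}" for x
  let ?I = "X ` set_pmf M"
  have sa: "(\<Sum>x\<in>?I. a x) = q" unfolding a_def q_def using sum_prob[OF fX, of "\<lambda>w. Y w = y"] by simp
  have sb: "(\<Sum>x\<in>?I. b x) = 1" unfolding b_def using sum_prob[OF fX, of "\<lambda>w. True"] by simp
  have ab: "a x \<le> b x" for x unfolding a_def b_def by (intro measure_pmf.finite_measure_mono) auto
  have q1: "q \<le> 1" "0 \<le> q" unfolding q_def by auto
  have a0: "0 \<le> a x" for x unfolding a_def by auto
  have "(\<Sum>x\<in>?I. \<bar>a x - b x * q\<bar>) = (\<Sum>x\<in>?I. 2 * max (a x - b x * q) 0 - (a x - b x * q))"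
    by (intro sum.cong refl) (auto simp: max_def abs_if)
  also have "\<dots> = 2 * (\<Sum>x\<in>?I. max (a x - b x * q) 0) - ((\<Sum>x\<in>?I. a x) - (\<Sum>x\<in>?I. b x) * q)"
    by (simp add: sum_subtractf sum_distrib_left sum_distrib_right)
  also have "\<dots> = 2 * (\<Sum>x\<in>?I. max (a x - b x * q) 0)" using sa sb by simp
  also have "\<dots> \<le> 2 * (\<Sum>x\<in>?I. a x * (1 - q))"
  proof -
    have "max (a x - b x * q) 0 \<le> a x * (1 - q)" for x
      using ab[of x] q1 a0[of x] mult_right_mono[OF ab[of x], of q] mult_right_mono[OF q1(1) a0[of x]] by (auto simp: max_def algebra_simps)
    then show ?thesis by (intro mult_left_mono sum_mono) auto
  qed
  also have "\<dots> = 2 * q * (1 - q)" using sa by (simp add: sum_distrib_right[symmetric])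
  finally show ?thesis unfolding a_def b_def q_def .
qed

lemma per_y_eq:
  assumes fY: "finite (Y ` set_pmf M)" and y: "y \<in> Y ` set_pmf M"
  shows "(\<Sum>x\<in>Y ` set_pmf M. \<bar>measure_pmf.prob M {w. Y w = x \<and> Y w = y} - measure_pmf.prob M {w. Y w = x} * measure_pmf.prob M {w. Y w = y}\<bar>)
     = 2 * measure_pmf.prob M {w. Y w = y} * (1 - measure_pmf.prob M {w. Y w = y})"
proof -
  define q where "q x = measure_pmf.prob M {w. Y w = x}" for x
  let ?I = "Y ` set_pmf M"
  have sb: "(\<Sum>x\<in>?I. q x) = 1" unfolding q_def using sum_prob[OF fY, of "\<lambda>w. True"] by simp
  have q1: "q x \<le> 1" "0 \<le> q x" for x unfolding q_def by auto
  have rem: "(\<Sum>x\<in>?I - {y}. q x) = 1 - q y" using sb sum.remove[OF fY y, of q] by simp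
  have "(\<Sum>x\<in>?I. \<bar>measure_pmf.prob M {w. Y w = x \<and> Y w = y} - q x * q y\<bar>)
     = \<bar>q y - q y * q y\<bar> + (\<Sum>x\<in>?I - {y}. \<bar>measure_pmf.prob M {w. Y w = x \<and> Y w = y} - q x * q y\<bar>)"
    by (subst sum.remove[OF fY y]) (simp_all add: q_def)
  also have "(\<Sum>x\<in>?I - {y}. \<bar>measure_pmf.prob M {w. Y w = x \<and> Y w = y} - q x * q y\<bar>) = (\<Sum>x\<in>?I - {y}. q x * q y)"
  proof (intro sum.cong refl)
    fix x assume "x \<in> ?I - {y}"
    then have e: "{w. Y w = x \<and> Y w = y} = {}" by auto
    show "\<bar>measure_pmf.prob M {w. Y w = x \<and> Y w = y} - q x * q y\<bar> = q x * q y"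
      using q1[of x] q1[of y] by (simp only: e) simp
  qed
  also have "\<dots> = (1 - q y) * q y" using rem by (simp add: sum_distrib_right[symmetric])
  also have "\<bar>q y - q y * q y\<bar> = q y * (1 - q y)" using q1[of y] by (simp add: algebra_simps mult_left_le)
  finally show ?thesis unfolding q_def by (simp add: algebra_simps)
qed

lemma UD_le:
  assumes fY: "finite (Y ` set_pmf M)"
  shows "UD M X Y \<le> UD M Y Y"
proof (cases "finite (X ` set_pmf M)")
  case False
  then have "UD M X Y = 0" unfolding UD_alt by simp
  then show ?thesis using UD_nonneg[of M Y Y] by simp
next
  case True
  have "UD M X Y = (\<Sum>y\<in>Y ` set_pmf M. \<Sum>x\<in>X ` set_pmf M.
     \<bar>measure_pmf.prob M {w. X w = x \<and> Y w = y} - measure_pmf.prob M {w. X w = x} * measure_pmf.prob M {w. Y w = y}\<bar>)"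
    unfolding UD_alt by (rule sum.swap)
  also have "\<dots> \<le> (\<Sum>y\<in>Y ` set_pmf M. 2 * measure_pmf.prob M {w. Y w = y} * (1 - measure_pmf.prob M {w. Y w = y}))"
    by (intro sum_mono per_y_le True)
  also have "\<dots> = (\<Sum>y\<in>Y ` set_pmf M. \<Sum>x\<in>Y ` set_pmf M.
     \<bar>measure_pmf.prob M {w. Y w = x \<and> Y w = y} - measure_pmf.prob M {w. Y w = x} * measure_pmf.prob M {w. Y w = y}\<bar>)"
    by (intro sum.cong refl per_y_eq[symmetric] fY)
  also have "\<dots> = UD M Y Y" unfolding UD_alt by (rule sum.swap)
  finally show ?thesis .
qed

lemma Dep_bounds:
  assumes fY: "finite (Y ` set_pmf M)"
  shows "0 \<le> Dep M X Y" "Dep M X Y \<le> 1"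
  unfolding Dep_def using UD_le[OF fY, of X] UD_nonneg[of M X Y]
  by (auto simp: divide_le_eq_1)


lemma UD_inj:
  assumes "inj g"
  shows "UD M (\<lambda>w. g (X w)) Y = UD M X Y"
proof -
  have im: "(\<lambda>w. g (X w)) ` set_pmf M = g ` (X ` set_pmf M)" by auto
  have e: "{w. g (X w) = g x} = {w. X w = x}" "{w. g (X w) = g x \<and> P w} = {w. X w = x \<and> P w}" for x P
    using assms by (auto dest: injD)
  show ?thesis unfolding UD_def im
    by (subst sum.reindex) (use assms in \<open>auto simp: e intro: inj_on_subset\<close>)
qed

lemma Dep_single: "DepS M (X::nat \<Rightarrow> 'w \<Rightarrow> 'v) {i} Y = Dep M (X i) Y"
proof -
  define g where "g v = restrict (\<lambda>k. v) {i}" for v :: 'v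
  have "inj g" unfolding g_def by (rule injI) (metis restrict_apply' singletonI)
  have "featvec X {i} = (\<lambda>w. g (X i w))" unfolding featvec_def g_def
    by (auto simp: restrict_def fun_eq_iff)
  then show ?thesis unfolding DepS_def Dep_def using UD_inj[OF \<open>inj g\<close>, of M "X i" Y] by simp
qed

lemma weights:
  assumes "finite A" "card A = m"
  shows "(\<Sum>S\<in>Pow A. fact (card S) * fact (Suc m - card S - 1) / fact (Suc m) :: real) = 1"
proof -
  define f where "f k = fact k * fact (Suc m - k - 1) / (fact (Suc m) :: real)" for k
  have "(\<Sum>S\<in>Pow A. f (card S)) = (\<Sum>k\<in>{0..m}. \<Sum>S\<in>{S\<in>Pow A. card S = k}. f (card S))"
    using assms by (intro sum.group[symmetric]) (auto intro: card_mono)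
  also have "\<dots> = (\<Sum>k\<in>{0..m}. of_nat (m choose k) * f k)"
  proof (intro sum.cong refl)
    fix k
    have "{S\<in>Pow A. card S = k} = {B. B \<subseteq> A \<and> card B = k}" by auto
    then have "card {S\<in>Pow A. card S = k} = m choose k" using n_subsets[OF assms(1)] assms by simp
    then show "(\<Sum>S\<in>{S\<in>Pow A. card S = k}. f (card S)) = of_nat (m choose k) * f k" by simp
  qed
  also have "\<dots> = (\<Sum>k\<in>{0..m}. 1 / real (Suc m))"
  proof (intro sum.cong refl)
    fix k assume "k \<in> {0..m}"
    then have k: "k \<le> m" by simp
    have "fact k * fact (m - k) * (m choose k) = (fact m :: real)"
      using binomial_fact_lemma[OF k] by (metis of_nat_fact of_nat_mult)
    then show "of_nat (m choose k) * f k = 1 / real (Suc m)"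
      unfolding f_def by (simp add: field_simps del: of_nat_Suc)
  qed
  also have "\<dots> = 1" by simp
  finally show ?thesis unfolding f_def .
qed


theorem mainTheorem9:
  fixes M :: "'w pmf" and X :: "nat \<Rightarrow> 'w \<Rightarrow> 'v" and Y :: "'w \<Rightarrow> 'y"
    and n i :: nat
  assumes finX: "\<And>j. j \<in> {1..n} \<Longrightarrow> finite (X j ` set_pmf M)"
    and finY: "finite (Y ` set_pmf M)"
    and nonconst: "\<not> (\<exists>c. \<forall>w\<in>set_pmf M. Y w = c)"
    and i: "i \<in> {1..n}"
    and FI1: "FI M X n Y i = 1"
  shows "Dep M (X i) Y = 1
    \<and> (\<forall>j\<in>{1..n} - {i}. FI M X n Y j = 0)
    \<and> (\<forall>j\<in>{1..n} - {i}. \<forall>S. S \<subseteq> {1..n} - {j} \<longrightarrow> DepS M X (S \<union> {j}) Y = DepS M X S Y)"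
proof -
  define m where "m = n - 1"
  have nm: "n = Suc m" using i unfolding m_def by auto
  define c where "c S = (fact (card S) * fact (n - card S - 1) / fact n :: real)" for S :: "nat set"
  define d where "d S = DepS M X (S \<union> {i}) Y - DepS M X S Y" for S
  have bnd: "0 \<le> DepS M X T Y" "DepS M X T Y \<le> 1" for T
    unfolding DepS_def using Dep_bounds[OF finY] by auto
  have cpos: "c S > 0" for S unfolding c_def by simp
  have fin: "finite (Pow ({1..n} - {i}))" by simp
  have cardA: "card ({1..n} - {i}) = m" unfolding m_def by (subst card_Diff_singleton[OF i]) simp_all
  have csum: "(\<Sum>S\<in>Pow ({1..n} - {i}). c S) = 1"
  proof -
    have "(\<Sum>S\<in>Pow ({1..n} - {i}). fact (card S) * fact (Suc m - card S - 1) / fact (Suc m) :: real) = 1"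
      by (rule weights[OF _ cardA]) simp
    then show ?thesis by (simp only: c_def nm)
  qed
  have dsum: "(\<Sum>S\<in>Pow ({1..n} - {i}). c S * d S) = 1"
    using FI1 unfolding FI_def c_def d_def .
  have s0: "(\<Sum>S\<in>Pow ({1..n} - {i}). c S * (1 - d S)) = 0"
    using csum dsum by (simp add: right_diff_distrib sum_subtractf)
  have nn: "\<forall>S\<in>Pow ({1..n} - {i}). 0 \<le> c S * (1 - d S)"
  proof
    fix S
    have "0 \<le> 1 - d S" unfolding d_def using bnd[of S] bnd[of "S \<union> {i}"] by linarith
    then show "0 \<le> c S * (1 - d S)" using cpos[of S] by simp
  qed
  have z: "\<forall>S\<in>Pow ({1..n} - {i}). c S * (1 - d S) = 0"
    using sum_nonneg_eq_0_iff[OF fin, of "\<lambda>S. c S * (1 - d S)"] s0 nn by simp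
  have K: "DepS M X (S \<union> {i}) Y = 1 \<and> DepS M X S Y = 0" if "S \<subseteq> {1..n} - {i}" for S
  proof -
    have "S \<in> Pow ({1..n} - {i})" using that by (simp only: Pow_iff)
    then have "c S * (1 - d S) = 0" using z by blast
    then have "d S = 1" using cpos[of S] by simp
    then show ?thesis unfolding d_def using bnd[of S] bnd[of "S \<union> {i}"] by linarith
  qed
  have A: "Dep M (X i) Y = 1" using K[of "{}"] Dep_single[of M X i Y] by simp
  have C: "\<forall>j\<in>{1..n} - {i}. \<forall>S. S \<subseteq> {1..n} - {j} \<longrightarrow> DepS M X (S \<union> {j}) Y = DepS M X S Y"
  proof (intro ballI allI impI)
    fix j S assume j: "j \<in> {1..n} - {i}" and S: "S \<subseteq> {1..n} - {j}"
    show "DepS M X (S \<union> {j}) Y = DepS M X S Y"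
    proof (cases "i \<in> S")
      case True
      have s1: "S - {i} \<subseteq> {1..n} - {i}" using S by blast
      have s2: "S \<union> {j} - {i} \<subseteq> {1..n} - {i}" using S j by blast
      have "DepS M X ((S - {i}) \<union> {i}) Y = 1" using K[OF s1] by simp
      moreover have "DepS M X ((S \<union> {j} - {i}) \<union> {i}) Y = 1" using K[OF s2] by simp
      moreover have "(S - {i}) \<union> {i} = S" "(S \<union> {j} - {i}) \<union> {i} = S \<union> {j}" using True by auto
      ultimately show ?thesis by simp
    next
      case False
      have s1: "S \<subseteq> {1..n} - {i}" using S False by blast
      have s2: "S \<union> {j} \<subseteq> {1..n} - {i}" using S j False by blast
      show ?thesis using K[OF s1] K[OF s2] by simp
    qed
  qed
  have B: "\<forall>j\<in>{1..n} - {i}. FI M X n Y j = 0"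
  proof
    fix j assume j: "j \<in> {1..n} - {i}"
    show "FI M X n Y j = 0" unfolding FI_def
    proof (rule sum.neutral, rule ballI)
      fix S assume "S \<in> Pow ({1..n} - {j})"
      then have "DepS M X (S \<union> {j}) Y = DepS M X S Y" using C j by blast
      then show "fact (card S) * fact (n - card S - 1) / fact n * (DepS M X (S \<union> {j}) Y - DepS M X S Y) = (0::real)" by simp
    qed
  qed
  show ?thesis using A B C by blast
qed

end
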